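(* Let $F\in\Gamma_0^s(\mathbb{R}_+)$ and $a\in(0,1)$. Suppose that $\hat F^a$ is a metric on $[0,+\infty)$ and that $T_a(F)=F$. Then there is $c\in(0,+\infty)$ such that $F(s)=c|s^a-1|^{1/a}$ for all $s\ge0$.
   Context: $\Gamma_0(\mathbb{R}_+)$ is the set of functions $F:[0,\infty)\to[0,\infty]$ that are convex, lower semicontinuous, with $F(1)=0$. For $F\in\Gamma_0(\mathbb{R}_+)$: $\mathrm{rec}(F)(r)=\lim_{\alpha\to\infty}F(1+\alpha r)/\alpha$, $F'_\infty:=\mathrm{rec}(F)(1)$; the perspective function is $\hat F(r,t)=tF(r/t)$ for $t>0$, $\hat F(r,0)=\mathrm{rec}(F)(r)$; the reverse entropy is $R(s)=sF(1/s)$ for $s>0$, $R(0)=F'_\infty$. $\Gamma_0^s(\mathbb{R}_+)$ is the set of $F\in\Gamma_0(\mathbb{R}_+)$ with $F=R$; for such $F$, $\hat F$ is symmetric and $\hat F(1,t)=F(t)$. The marginal perspective function $H_F$ is the lower semicontinuous envelope of $\tilde H_F(r_1,r_2)=\inf_{\theta>0}[\hat F(\theta,r_1)+\hat F(\theta,r_2)]$. For $a\in(0,1]$, $T_a(F)(s)=2^{1/a-1}H_F(1,s)$. A metric on $[0,\infty)$ is a finite-valued function $D:[0,\infty)^2\to[0,\infty)$ with $D(x,y)=0\iff x=y$, symmetric, satisfying the triangle inequality. *)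

theory Defs
  imports "HOL-Analysis.Analysis"
begin

text \<open>Functions F : [0,\<infinity>) \<rightarrow> [0,\<infinity>] are modelled as real \<Rightarrow> ereal; only values on
  {0..} matter.\<close>

definition convex_ext_on :: "real set \<Rightarrow> (real \<Rightarrow> ereal) \<Rightarrow> bool" where
  "convex_ext_on S F \<longleftrightarrow> (\<forall>x\<in>S. \<forall>y\<in>S. \<forall>t::real. 0 \<le> t \<and> t \<le> 1 \<longrightarrow>
      F ((1 - t) * x + t * y) \<le> ereal (1 - t) * F x + ereal t * F y)"

definition lsc_ext_on :: "real set \<Rightarrow> (real \<Rightarrow> ereal) \<Rightarrow> bool" where
  "lsc_ext_on S F \<longleftrightarrow> (\<forall>x\<in>S. F x \<le> Liminf (at x within S) F)"

definition Gamma0 :: "(real \<Rightarrow> ereal) set" where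
  "Gamma0 = {F. (\<forall>x\<ge>0. F x \<ge> 0) \<and> convex_ext_on {0..} F \<and> lsc_ext_on {0..} F \<and> F 1 = 0}"

definition recF :: "(real \<Rightarrow> ereal) \<Rightarrow> real \<Rightarrow> ereal" where
  "recF F r = Lim at_top (\<lambda>\<alpha>::real. F (1 + \<alpha> * r) / ereal \<alpha>)"

definition Finf :: "(real \<Rightarrow> ereal) \<Rightarrow> ereal" where
  "Finf F = recF F 1"

definition persp :: "(real \<Rightarrow> ereal) \<Rightarrow> real \<Rightarrow> real \<Rightarrow> ereal" where
  "persp F r t = (if t > 0 then ereal t * F (r / t) else recF F r)"

definition rev_entropy :: "(real \<Rightarrow> ereal) \<Rightarrow> real \<Rightarrow> ereal" where
  "rev_entropy F s = (if s > 0 then ereal s * F (1 / s) else Finf F)"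

definition Gamma0s :: "(real \<Rightarrow> ereal) set" where
  "Gamma0s = {F. F \<in> Gamma0 \<and> (\<forall>s\<ge>0. F s = rev_entropy F s)}"

definition tildeH :: "(real \<Rightarrow> ereal) \<Rightarrow> real \<Rightarrow> real \<Rightarrow> ereal" where
  "tildeH F r1 r2 = (INF \<theta>\<in>{0<..}. persp F \<theta> r1 + persp F \<theta> r2)"

text \<open>Lower semicontinuous envelope on [0,\<infinity>)^2 (closure of the epigraph):
  H(p) = sup over e>0 of inf of tildeH on the e-ball around p within the domain.\<close>
definition margH :: "(real \<Rightarrow> ereal) \<Rightarrow> real \<Rightarrow> real \<Rightarrow> ereal" where
  "margH F r1 r2 = (SUP e\<in>{0<..}. INF q\<in>{q. fst q \<ge> 0 \<and> snd q \<ge> 0 \<and> dist q (r1, r2) < e}.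
       tildeH F (fst q) (snd q))"

definition Ta :: "real \<Rightarrow> (real \<Rightarrow> ereal) \<Rightarrow> real \<Rightarrow> ereal" where
  "Ta a F s = ereal (2 powr (1 / a - 1)) * margH F 1 s"

definition metric_on_nonneg :: "(real \<Rightarrow> real \<Rightarrow> real) \<Rightarrow> bool" where
  "metric_on_nonneg D \<longleftrightarrow>
     (\<forall>x\<ge>0. \<forall>y\<ge>0. D x y \<ge> 0 \<and> (D x y = 0 \<longleftrightarrow> x = y) \<and> D x y = D y x) \<and>
     (\<forall>x\<ge>0. \<forall>y\<ge>0. \<forall>z\<ge>0. D x z \<le> D x y + D y z)"

definition persp_pow_metric :: "(real \<Rightarrow> ereal) \<Rightarrow> real \<Rightarrow> bool" where
  "persp_pow_metric F a \<longleftrightarrow>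
     (\<forall>x\<ge>0. \<forall>y\<ge>0. \<bar>persp F x y\<bar> \<noteq> \<infinity>) \<and>
     metric_on_nonneg (\<lambda>x y. (real_of_ereal (persp F x y)) powr a)"

end

theory Submission
  imports Defs
begin


lemma mvt_pow:
  fixes p u v :: real
  assumes "p > 1" "0 \<le> u" "u < v"
  shows "\<exists>z. u < z \<and> z < v \<and> v powr p - u powr p = (v - u) * (p * z powr (p - 1))"
proof -
  have c: "continuous_on {u..v} (\<lambda>t. t powr p)"
    by (rule continuous_on_powr') (use assms in \<open>auto intro!: continuous_intros\<close>)
  have d: "(\<lambda>t. t powr p) differentiable (at x)" if "u < x" "x < v" for x
  proof -
    have "x > 0" using that assms by linarith
    thus ?thesis using has_real_derivative_powr real_differentiable_def by blast
  qed
  from MVT[OF assms(3) c d] obtain l z where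
    z: "u < z" "z < v" "DERIV (\<lambda>t. t powr p) z :> l" "v powr p - u powr p = (v - u) * l" by blast
  have "z > 0" using z assms by linarith
  hence "l = p * z powr (p - 1)"
    using DERIV_unique[OF z(3) has_real_derivative_powr] by blast
  with z show ?thesis by blast
qed

lemma pm_strict:
  fixes p X Y :: real
  assumes "p > 1" "0 \<le> Y" "Y < X"
  shows "2 * ((X+Y)/2) powr p < X powr p + Y powr p"
proof -
  define m where "m = (X+Y)/2"
  have m: "Y < m" "m < X" using assms by (auto simp: m_def)
  have m0: "0 \<le> m" using m assms by linarith
  obtain z1 where z1: "m < z1" "z1 < X" "X powr p - m powr p = (X - m) * (p * z1 powr (p - 1))"
    using mvt_pow[OF assms(1) m0 m(2)] by blast
  obtain z2 where z2: "Y < z2" "z2 < m" "m powr p - Y powr p = (m - Y) * (p * z2 powr (p - 1))"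
    using mvt_pow[OF assms(1) assms(2) m(1)] by blast
  have "z2 powr (p-1) < z1 powr (p-1)"
    by (rule powr_less_mono2) (use assms z1 z2 in auto)
  hence lt: "p * z2 powr (p - 1) < p * z1 powr (p - 1)" using assms by simp
  have e: "X - m = m - Y" by (simp add: m_def field_simps)
  have pos: "X - m > 0" using m by linarith
  have "(m - Y) * (p * z2 powr (p - 1)) < (X - m) * (p * z1 powr (p - 1))"
    unfolding e using lt pos e by (simp only: mult_strict_left_mono)
  hence "m powr p - Y powr p < X powr p - m powr p"
    using z1(3) z2(3) by linarith
  thus ?thesis unfolding m_def by simp
qed

lemma pm_weak:
  fixes p X Y :: real
  assumes "p > 1" "0 \<le> Y" "0 \<le> X"
  shows "2 * ((X+Y)/2) powr p \<le> X powr p + Y powr p"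
proof -
  consider "Y < X" | "X < Y" | "X = Y" by linarith
  thus ?thesis
  proof cases
    case 1 thus ?thesis using pm_strict[OF assms(1) assms(2) 1] by simp
  next
    case 2 thus ?thesis using pm_strict[OF assms(1) assms(3) 2] by (simp add: add.commute)
  qed simp
qed

lemma pow_le_imp_le:
  fixes p x y :: real
  assumes "p > 0" "0 \<le> x" "0 \<le> y" "x powr p \<le> y powr p"
  shows "x \<le> y"
  using powr_less_mono2[of p y x] assms by force

lemma gap:
  fixes p A \<epsilon> :: real
  assumes p: "p > 1" and A: "A \<ge> 0" and e: "\<epsilon> > 0"
  shows "\<exists>\<delta>>0. \<forall>X Y. X \<ge> 0 \<longrightarrow> Y \<ge> 0 \<longrightarrow> X + Y \<ge> A - \<delta> \<longrightarrow>
            X powr p + Y powr p \<le> 2 * (A/2) powr p + \<delta> \<longrightarrow> \<bar>X - A/2\<bar> \<le> \<epsilon> \<and> \<bar>Y - A/2\<bar> \<le> \<epsilon>"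
proof -
  define R where "R = (2 * (A/2) powr p + 1) powr (1/p)"
  have Rb: "X \<le> R" if "X \<ge> 0" "X powr p \<le> 2 * (A/2) powr p + 1" for X
  proof -
    have "X = (X powr p) powr (1/p)" using p that by (simp add: powr_powr)
    also have "\<dots> \<le> R" unfolding R_def using that p by (intro powr_mono2) auto
    finally show ?thesis .
  qed
  define K where "K = ({0..R} \<times> {0..R}) \<inter> {z::real\<times>real. \<epsilon> \<le> \<bar>fst z - A/2\<bar> \<or> \<epsilon> \<le> \<bar>snd z - A/2\<bar>}"
  define \<Phi> where "\<Phi> z = max (A - (fst z + snd z)) (fst z powr p + snd z powr p - 2 * (A/2) powr p)" for z :: "real \<times> real"
  have cK: "compact K" unfolding K_def
    by (intro compact_Int_closed compact_Times compact_Icc closed_Un closed_Collect_le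
        continuous_intros) (simp add: Collect_disj_eq closed_Un closed_Collect_le continuous_intros)
  have Kpos: "\<Phi> z > 0" if "z \<in> K" for z
  proof (rule ccontr)
    assume "\<not> \<Phi> z > 0"
    obtain X Y where z: "z = (X, Y)" by fastforce
    have XY: "X \<ge> 0" "Y \<ge> 0" "\<epsilon> \<le> \<bar>X - A/2\<bar> \<or> \<epsilon> \<le> \<bar>Y - A/2\<bar>" using that z by (auto simp: K_def)
    have h1: "X + Y \<ge> A" and h2: "X powr p + Y powr p \<le> 2 * (A/2) powr p"
      using \<open>\<not> \<Phi> z > 0\<close> by (auto simp: \<Phi>_def z)
    have "(A/2) powr p \<le> ((X+Y)/2) powr p" using h1 A p by (intro powr_mono2) auto
    hence h3: "X powr p + Y powr p \<le> 2 * ((X+Y)/2) powr p" using h2 by linarith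
    have "X = Y"
    proof (rule ccontr)
      assume "X \<noteq> Y"
      then consider "Y < X" | "X < Y" by linarith
      thus False
      proof cases
        case 1 thus ?thesis using pm_strict[OF p XY(2) 1] h3 by linarith
      next
        case 2 thus ?thesis using pm_strict[OF p XY(1) 2] h3 by (simp add: add.commute)
      qed
    qed
    hence "X powr p \<le> (A/2) powr p" using h2 by simp
    hence "X \<le> A/2" using pow_le_imp_le[of p X "A/2"] p XY A by simp
    moreover have "X \<ge> A/2" using h1 \<open>X = Y\<close> by simp
    ultimately have "X = A/2" "Y = A/2" using \<open>X = Y\<close> by auto
    thus False using XY e by simp
  qed
  show ?thesis
  proof (cases "K = {}")
    case True
    show ?thesis
    proof (rule exI[of _ 1], rule conjI, simp, intro allI impI)
      fix X Y :: real
      assume H: "X \<ge> 0" "Y \<ge> 0" "X + Y \<ge> A - 1" "X powr p + Y powr p \<le> 2 * (A/2) powr p + 1"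
      have "X powr p \<le> 2 * (A/2) powr p + 1" "Y powr p \<le> 2 * (A/2) powr p + 1"
        using H(4) powr_ge_zero[of X p] powr_ge_zero[of Y p] by linarith+
      hence "X \<le> R" "Y \<le> R" using Rb H by auto
      hence "(X, Y) \<notin> K" using True by auto
      thus "\<bar>X - A/2\<bar> \<le> \<epsilon> \<and> \<bar>Y - A/2\<bar> \<le> \<epsilon>" using H \<open>X \<le> R\<close> \<open>Y \<le> R\<close> by (auto simp: K_def)
    qed
  next
    case False
    have c1: "continuous_on K (\<lambda>z. fst z powr p)" "continuous_on K (\<lambda>z. snd z powr p)"
      by (rule continuous_on_powr'; use p in \<open>auto simp: K_def intro!: continuous_intros\<close>)+
    have cont: "continuous_on K \<Phi>" unfolding \<Phi>_def
      by (intro continuous_intros c1)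
    obtain z0 where z0: "z0 \<in> K" "\<And>y. y \<in> K \<Longrightarrow> \<Phi> z0 \<le> \<Phi> y"
      using continuous_attains_inf[OF cK False cont] by blast
    have pz: "\<Phi> z0 > 0" using Kpos z0 by blast
    show ?thesis
    proof (rule exI[of _ "min 1 (\<Phi> z0 / 2)"], rule conjI, use pz in simp, intro allI impI)
      fix X Y :: real
      assume H: "X \<ge> 0" "Y \<ge> 0" "X + Y \<ge> A - min 1 (\<Phi> z0 / 2)"
         "X powr p + Y powr p \<le> 2 * (A/2) powr p + min 1 (\<Phi> z0 / 2)"
      have "X powr p \<le> 2 * (A/2) powr p + 1" "Y powr p \<le> 2 * (A/2) powr p + 1"
        using H(4) powr_ge_zero[of X p] powr_ge_zero[of Y p] by linarith+
      hence R2: "X \<le> R" "Y \<le> R" using Rb H by auto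
      have "A - (X+Y) \<le> min 1 (\<Phi> z0/2)" "X powr p + Y powr p - 2*(A/2) powr p \<le> min 1 (\<Phi> z0/2)"
        using H(3,4) by linarith+
      hence "\<Phi> (X, Y) \<le> min 1 (\<Phi> z0 / 2)" unfolding \<Phi>_def[of "(X,Y)"] fst_conv snd_conv by (rule max.boundedI)
      hence "(X, Y) \<notin> K" using z0(2)[of "(X,Y)"] pz by linarith
      thus "\<bar>X - A/2\<bar> \<le> \<epsilon> \<and> \<bar>Y - A/2\<bar> \<le> \<epsilon>" using H R2 by (auto simp: K_def)
    qed
  qed
qed




locale thm7 =
  fixes F :: "real \<Rightarrow> ereal" and a :: real
  assumes FG: "F \<in> Gamma0s" and a0: "0 < a" and a1: "a < 1"
    and met: "persp_pow_metric F a" and fixp: "\<forall>s\<ge>0. Ta a F s = F s"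
begin

definition "p = 1/a"
definition "f x = real_of_ereal (F x)"
definition "D x y = real_of_ereal (persp F x y)"
definition "d x y = D x y powr a"

lemma p_gt1: "p > 1" and ap: "a * p = 1" and p_pos: "p > 0"
  using a0 a1 by (auto simp: p_def field_simps)

lemma F_nonneg: "x \<ge> 0 \<Longrightarrow> F x \<ge> 0" and F1: "F 1 = 0" and Fconv: "convex_ext_on {0..} F"
  and Fsym: "s \<ge> 0 \<Longrightarrow> F s = rev_entropy F s"
  using FG by (auto simp: Gamma0s_def Gamma0_def)

lemma fin: "x \<ge> 0 \<Longrightarrow> y \<ge> 0 \<Longrightarrow> \<bar>persp F x y\<bar> \<noteq> \<infinity>"
  using met by (auto simp: persp_pow_metric_def)

lemma metr: "metric_on_nonneg d"
  using met by (simp add: persp_pow_metric_def d_def[abs_def] D_def[abs_def])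

lemma persp1: "persp F x 1 = F x"
  by (simp add: persp_def)

lemma F_fin: "x \<ge> 0 \<Longrightarrow> F x = ereal (f x)"
  using fin[of x 1] by (simp add: persp1 f_def ereal_real)

lemma f_nonneg: "x \<ge> 0 \<Longrightarrow> f x \<ge> 0"
  using F_nonneg F_fin by force

lemma f1: "f 1 = 0" using F1 by (simp add: f_def)

lemma persp_pos: "x \<ge> 0 \<Longrightarrow> y > 0 \<Longrightarrow> persp F x y = ereal (y * f (x/y))"
  by (simp add: persp_def F_fin)

lemma D_pos: "x \<ge> 0 \<Longrightarrow> y > 0 \<Longrightarrow> D x y = y * f (x/y)"
  by (simp add: D_def persp_pos)

lemma f_conv:
  assumes "x \<ge> 0" "y \<ge> 0" "0 \<le> t" "t \<le> 1"
  shows "f ((1-t)*x + t*y) \<le> (1-t) * f x + t * f y"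
proof -
  have "F ((1-t)*x + t*y) \<le> ereal (1-t) * F x + ereal t * F y"
    using Fconv assms by (auto simp: convex_ext_on_def)
  moreover have "(1-t)*x + t*y \<ge> 0" using assms by simp
  ultimately show ?thesis using assms by (simp add: F_fin)
qed

lemma recF_nonneg:
  assumes x: "x \<ge> 0"
  shows "recF F x \<ge> 0"
proof -
  define g where "g \<alpha> = f (1 + \<alpha> * x) / \<alpha>" for \<alpha>
  have h: "F (1 + \<alpha> * x) / ereal \<alpha> = ereal (g \<alpha>)" if "\<alpha> > 0" for \<alpha>
    using that x by (simp add: F_fin g_def)
  have mono: "g \<alpha> \<le> g \<beta>" if "0 < \<alpha>" "\<alpha> \<le> \<beta>" for \<alpha> \<beta>
  proof -
    define t where "t = \<alpha> / \<beta>"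
    have t: "0 \<le> t" "t \<le> 1" using that by (auto simp: t_def)
    have eq: "(1-t)*1 + t*(1 + \<beta> * x) = 1 + \<alpha> * x" using that by (simp add: t_def field_simps)
    have "f (1 + \<alpha> * x) \<le> (1-t) * f 1 + t * f (1 + \<beta> * x)"
      using f_conv[of 1 "1 + \<beta> * x" t] t that x unfolding eq by simp
    hence "f (1 + \<alpha> * x) \<le> \<alpha> / \<beta> * f (1 + \<beta> * x)" by (simp add: f1 t_def)
    thus ?thesis using that by (simp add: g_def field_simps)
  qed
  have g0: "g \<alpha> \<ge> 0" if "\<alpha> > 0" for \<alpha> using that x f_nonneg by (simp add: g_def)
  define L where "L = (SUP \<alpha>\<in>{0<..}. ereal (g \<alpha>))"
  have tl: "((\<lambda>\<alpha>. F (1 + \<alpha> * x) / ereal \<alpha>) \<longlongrightarrow> L) at_top"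
  proof (rule order_tendstoI)
    fix y assume "y < L"
    then obtain \<alpha>0 where a0: "\<alpha>0 > 0" "y < ereal (g \<alpha>0)" unfolding L_def less_SUP_iff by auto
    show "\<forall>\<^sub>F \<alpha> in at_top. y < F (1 + \<alpha> * x) / ereal \<alpha>"
      using eventually_ge_at_top[of \<alpha>0]
    proof eventually_elim
      case (elim \<alpha>)
      hence le: "ereal (g \<alpha>0) \<le> ereal (g \<alpha>)" using mono a0 by simp
      have eq: "F (1 + \<alpha> * x) / ereal \<alpha> = ereal (g \<alpha>)" using a0 elim by (intro h) simp
      have "y < ereal (g \<alpha>)" using a0(2) le by (rule less_le_trans)
      thus ?case unfolding eq .
    qed
  next
    fix y assume "L < y"
    show "\<forall>\<^sub>F \<alpha> in at_top. F (1 + \<alpha> * x) / ereal \<alpha> < y"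
      using eventually_gt_at_top[of 0]
    proof eventually_elim
      case (elim \<alpha>)
      have "ereal (g \<alpha>) \<le> L" unfolding L_def using elim by (intro SUP_upper) auto
      thus ?case using h[of \<alpha>] elim \<open>L < y\<close> by simp
    qed
  qed
  have "recF F x = L" unfolding recF_def by (rule tendsto_Lim[OF _ tl]) simp
  moreover have "ereal (g 1) \<le> L" unfolding L_def by (intro SUP_upper) auto
  moreover have "0 \<le> ereal (g 1)" using g0[of 1] by simp
  ultimately show ?thesis by (metis order_trans)
qed

end



context thm7 begin

lemma D_nonneg: assumes "x \<ge> 0" "y \<ge> 0" shows "D x y \<ge> 0"
proof (cases "y > 0")
  case True thus ?thesis using assms by (simp add: D_pos f_nonneg)
next
  case False
  hence "y = 0" using assms by simp
  hence "persp F x y = recF F x" by (simp add: persp_def)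
  thus ?thesis using recF_nonneg[OF assms(1)] by (simp add: D_def real_of_ereal_pos)
qed

lemma persp_eq: "x \<ge> 0 \<Longrightarrow> y \<ge> 0 \<Longrightarrow> persp F x y = ereal (D x y)"
  using fin by (simp add: D_def ereal_real)

lemma d_nonneg: "x \<ge> 0 \<Longrightarrow> y \<ge> 0 \<Longrightarrow> d x y \<ge> 0"
  and d_zero: "x \<ge> 0 \<Longrightarrow> y \<ge> 0 \<Longrightarrow> d x y = 0 \<longleftrightarrow> x = y"
  and d_sym: "x \<ge> 0 \<Longrightarrow> y \<ge> 0 \<Longrightarrow> d x y = d y x"
  and d_tri: "x \<ge> 0 \<Longrightarrow> y \<ge> 0 \<Longrightarrow> z \<ge> 0 \<Longrightarrow> d x z \<le> d x y + d y z"
  using metr unfolding metric_on_nonneg_def by blast+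

lemma d_self: "x \<ge> 0 \<Longrightarrow> d x x = 0" using d_zero by simp

lemma D_eq: assumes "x \<ge> 0" "y \<ge> 0" shows "D x y = d x y powr p"
proof -
  have "d x y powr p = D x y powr (a * p)" by (simp add: d_def powr_powr)
  also have "\<dots> = D x y" using ap D_nonneg[OF assms] by simp
  finally show ?thesis by simp
qed

lemma f_sym: "s > 0 \<Longrightarrow> f s = s * f (1/s)"
  using Fsym[of s] F_fin[of s] F_fin[of "1/s"] by (simp add: rev_entropy_def)

lemma d_hom_pos: assumes "l > 0" "x \<ge> 0" "y > 0" shows "d (l*x) (l*y) = l powr a * d x y"
proof -
  have "D (l*x) (l*y) = l * D x y" using assms by (simp add: D_pos)
  thus ?thesis using assms D_nonneg[of x y] by (simp add: d_def powr_mult)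
qed

lemma d_hom: assumes "l > 0" "x \<ge> 0" "y \<ge> 0" shows "d (l*x) (l*y) = l powr a * d x y"
proof (cases "y > 0")
  case True thus ?thesis using d_hom_pos assms by blast
next
  case False
  hence y: "y = 0" using assms by simp
  show ?thesis
  proof (cases "x > 0")
    case True
    have "d (l*x) (l*y) = d (l*y) (l*x)" using assms by (intro d_sym) auto
    also have "\<dots> = l powr a * d y x" using d_hom_pos[OF assms(1), of y x] True y by simp
    also have "d y x = d x y" using assms by (intro d_sym) auto
    finally show ?thesis .
  next
    case False
    hence "x = 0" using assms by simp
    thus ?thesis using y d_self by simp
  qed
qed

definition "c0 = d 0 1"

lemma c0_pos: "c0 > 0"
  using d_zero[of 0 1] d_nonneg[of 0 1] by (auto simp: c0_def)

lemma c0_f0: "c0 = f 0 powr a"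
  by (simp add: c0_def d_def D_pos)

lemma d0: assumes "y \<ge> 0" shows "d 0 y = y powr a * c0"
proof (cases "y > 0")
  case True
  thus ?thesis using d_hom[OF True, of 0 1] by (simp add: c0_def)
next
  case False thus ?thesis using assms d_self by simp
qed

lemma f_near1:
  assumes "r \<ge> 0" "\<bar>r - 1\<bar> \<le> 1/2"
  shows "f r \<le> 2 * \<bar>r - 1\<bar> * (f (1/2) + f (3/2))"
proof (cases "r \<ge> 1")
  case True
  define t where "t = 2*(r-1)"
  have t: "0 \<le> t" "t \<le> 1" using True assms by (auto simp: t_def)
  have "r = (1-t)*1 + t*(3/2)" by (simp add: t_def field_simps)
  hence "f r \<le> (1-t) * f 1 + t * f (3/2)" using f_conv[of 1 "3/2" t] t by simp
  also have "\<dots> = t * f (3/2)" by (simp add: f1)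
  also have "\<dots> \<le> 2 * \<bar>r - 1\<bar> * (f (1/2) + f (3/2))"
    using True f_nonneg[of "1/2"] f_nonneg[of "3/2"] t by (simp add: t_def mult_left_mono)
  finally show ?thesis .
next
  case False
  define t where "t = 2*(1-r)"
  have t: "0 \<le> t" "t \<le> 1" using False assms by (auto simp: t_def)
  have "r = (1-t)*1 + t*(1/2)" by (simp add: t_def field_simps)
  hence "f r \<le> (1-t) * f 1 + t * f (1/2)" using f_conv[of 1 "1/2" t] t by simp
  also have "\<dots> = t * f (1/2)" by (simp add: f1)
  also have "\<dots> \<le> 2 * \<bar>r - 1\<bar> * (f (1/2) + f (3/2))"
    using False f_nonneg[of "1/2"] f_nonneg[of "3/2"] t by (simp add: t_def mult_left_mono)
  finally show ?thesis .
qed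

lemma small_pow: assumes "\<zeta> > 0" "0 \<le> x" "x < \<zeta> powr p" shows "x powr a < \<zeta>"
proof -
  have "x powr a < (\<zeta> powr p) powr a" using assms a0 by (intro powr_less_mono2) auto
  also have "\<dots> = \<zeta>" using ap assms by (simp add: powr_powr mult.commute)
  finally show ?thesis .
qed

lemma d_cont:
  assumes z: "z \<ge> 0" and ze: "\<zeta> > 0"
  shows "\<exists>e>0. \<forall>w\<ge>0. \<bar>w - z\<bar> < e \<longrightarrow> d w z < \<zeta>"
proof -
  define \<beta> where "\<beta> = \<zeta> powr p"
  have b: "\<beta> > 0" using ze by (simp add: \<beta>_def)
  show ?thesis
  proof (cases "z > 0")
    case True
    define M where "M = f (1/2) + f (3/2)"
    have M: "M \<ge> 0" using f_nonneg[of "1/2"] f_nonneg[of "3/2"] by (simp add: M_def)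
    define e where "e = min (z/2) (\<beta> / (2*M+1))"
    have e: "e > 0" using True b M by (simp add: e_def)
    show ?thesis
    proof (intro exI[of _ e] conjI allI impI e)
      fix w :: real assume w: "w \<ge> 0" "\<bar>w - z\<bar> < e"
      have r1: "\<bar>w/z - 1\<bar> = \<bar>w - z\<bar> / z" using True by (simp add: field_simps abs_div_pos flip: abs_divide)
      have "\<bar>w - z\<bar> / z \<le> 1/2" using w True by (simp add: e_def field_simps)
      hence fw: "f (w/z) \<le> 2 * (\<bar>w - z\<bar> / z) * M" using f_near1[of "w/z"] w True r1 by (simp add: M_def)
      have "z * f (w/z) \<le> z * (2 * (\<bar>w - z\<bar> / z) * M)" by (rule mult_left_mono[OF fw]) (use True in auto)
      hence "D w z \<le> z * (2 * (\<bar>w - z\<bar> / z) * M)" using True w by (simp only: D_pos)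
      also have "\<dots> = 2 * \<bar>w - z\<bar> * M" using True by simp
      also have "\<dots> \<le> 2 * e * M" using w M by (simp add: mult_right_mono)
      also have "\<dots> < \<beta>"
      proof -
        have h: "e \<le> \<beta>/(2*M+1)" unfolding e_def by simp
        have "e * (2*M+1) \<le> \<beta>" using h M by (simp add: le_divide_eq)
        hence "2*e*M + e \<le> \<beta>" by (simp add: algebra_simps)
        thus ?thesis using e by linarith
      qed
      finally have "D w z < \<beta>" .
      thus "d w z < \<zeta>" unfolding d_def \<beta>_def using small_pow ze D_nonneg w z by simp
    qed
  next
    case False
    hence z0: "z = 0" using z by simp
    define e where "e = \<beta> / (f 0 + 1)"
    have f0: "f 0 \<ge> 0" using f_nonneg by simp
    have e: "e > 0" using b f0 by (simp add: e_def)
    show ?thesis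
    proof (intro exI[of _ e] conjI allI impI e)
      fix w :: real assume w: "w \<ge> 0" "\<bar>w - z\<bar> < e"
      show "d w z < \<zeta>"
      proof (cases "w = 0")
        case True thus ?thesis using z0 d_self ze by simp
      next
        case False
        hence wp: "w > 0" using w by simp
        have "d w z = d 0 w" using z0 w by (simp add: d_sym)
        also have "\<dots> = (w * f 0) powr a" by (simp add: d_def D_pos wp)
        also have "\<dots> < \<zeta>"
        proof (rule small_pow[OF ze])
          show "0 \<le> w * f 0" using w f0 by simp
          have "w * f 0 \<le> e * f 0" using w z0 f0 by (simp add: mult_right_mono)
          also have "\<dots> < \<beta>" using b f0 by (simp add: e_def field_simps)
          finally show "w * f 0 < \<zeta> powr p" by (simp add: \<beta>_def)
        qed
        finally show ?thesis .
      qed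
    qed
  qed
qed

end



context thm7 begin

lemma L_eq: assumes "A \<ge> 0" shows "A powr p / 2 powr (p - 1) = 2 * (A/2) powr p"
  by (simp add: powr_divide powr_diff field_simps)

lemma mid1:
  assumes s: "s \<ge> 0" and ep: "\<epsilon> > 0"
  shows "\<exists>\<theta>\<ge>0. \<bar>d 1 \<theta> - d 1 s / 2\<bar> \<le> \<epsilon> \<and> \<bar>d \<theta> s - d 1 s / 2\<bar> \<le> \<epsilon>"
proof -
  define A where "A = d 1 s"
  have A0: "A \<ge> 0" using d_nonneg s by (simp add: A_def)
  have fs: "f s = A powr p"
  proof -
    have "f s = D s 1" using s by (simp add: D_pos)
    also have "\<dots> = d s 1 powr p" using s by (simp add: D_eq)
    finally show ?thesis using d_sym[of s 1] s by (simp add: A_def)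
  qed
  define L where "L = 2 * (A/2) powr p"
  have mH: "margH F 1 s = ereal L"
  proof -
    have "ereal (2 powr (1 / a - 1)) * margH F 1 s = ereal (f s)"
      using fixp s F_fin[OF s] by (simp add: Ta_def)
    hence h: "ereal (2 powr (p - 1)) * margH F 1 s = ereal (A powr p)" by (simp add: p_def fs)
    have pos: "2 powr (p - 1) > 0" by simp
    show ?thesis
    proof (cases "margH F 1 s")
      case (real r)
      hence "2 powr (p - 1) * r = A powr p" using h by simp
      hence "r = A powr p / 2 powr (p - 1)" using pos by (simp add: field_simps)
      thus ?thesis using real L_eq[OF A0] by (simp add: L_def)
    next
      case PInf thus ?thesis using h pos by simp
    next
      case MInf thus ?thesis using h pos by simp
    qed
  qed
  obtain \<delta> where dl: "\<delta> > 0" and gp: "\<And>X Y. X \<ge> 0 \<Longrightarrow> Y \<ge> 0 \<Longrightarrow> X + Y \<ge> A - \<delta> \<Longrightarrow>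
            X powr p + Y powr p \<le> 2 * (A/2) powr p + \<delta> \<Longrightarrow> \<bar>X - A/2\<bar> \<le> \<epsilon>/2 \<and> \<bar>Y - A/2\<bar> \<le> \<epsilon>/2"
    using gap[OF p_gt1 A0, of "\<epsilon>/2"] ep by auto
  define \<zeta> where "\<zeta> = min (\<delta>/2) (\<epsilon>/2)"
  have zp: "\<zeta> > 0" using dl ep by (simp add: \<zeta>_def)
  obtain e1 where e1: "e1 > 0" "\<And>w. w \<ge> 0 \<Longrightarrow> \<bar>w - 1\<bar> < e1 \<Longrightarrow> d w 1 < \<zeta>"
    using d_cont[of 1 \<zeta>] zp by auto
  obtain e2 where e2: "e2 > 0" "\<And>w. w \<ge> 0 \<Longrightarrow> \<bar>w - s\<bar> < e2 \<Longrightarrow> d w s < \<zeta>"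
    using d_cont[OF s zp] by auto
  define e where "e = min e1 e2"
  have ee: "e > 0" using e1 e2 by (simp add: e_def)
  define Q where "Q = {q::real\<times>real. fst q \<ge> 0 \<and> snd q \<ge> 0 \<and> dist q (1, s) < e}"
  have "(INF q\<in>Q. tildeH F (fst q) (snd q)) \<le> margH F 1 s"
    unfolding margH_def Q_def using ee by (intro SUP_upper) auto
  also have "\<dots> < ereal (L + \<delta>)" using mH dl by simp
  finally obtain q where q: "q \<in> Q" "tildeH F (fst q) (snd q) < ereal (L + \<delta>)"
    unfolding INF_less_iff by blast
  define q1 where "q1 = fst q"
  define q2 where "q2 = snd q"
  have q12: "q1 \<ge> 0" "q2 \<ge> 0" "\<bar>q1 - 1\<bar> < e" "\<bar>q2 - s\<bar> < e"
    using q(1) dist_fst_le[of q "(1,s)"] dist_snd_le[of q "(1,s)"]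
    by (auto simp: Q_def q1_def q2_def dist_real_def)
  obtain \<theta> where th: "\<theta> > 0" "persp F \<theta> q1 + persp F \<theta> q2 < ereal (L + \<delta>)"
    using q(2) unfolding tildeH_def INF_less_iff q1_def q2_def by auto
  have sum: "D \<theta> q1 + D \<theta> q2 < L + \<delta>"
    using th q12 by (simp add: persp_eq)
  define X where "X = d \<theta> q1"
  define Y where "Y = d \<theta> q2"
  have X0: "X \<ge> 0" "Y \<ge> 0" using d_nonneg th q12 by (auto simp: X_def Y_def)
  have dq1: "d q1 1 < \<zeta>" using e1 q12 by (simp add: e_def)
  have dq2: "d q2 s < \<zeta>" using e2 q12 by (simp add: e_def)
  have t1: "d 1 \<theta> \<le> d 1 q1 + X" using d_tri[of 1 q1 \<theta>] q12 th d_sym[of q1 \<theta>] by (simp add: X_def)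
  have t2: "X \<le> d \<theta> 1 + d 1 q1" using d_tri[of \<theta> 1 q1] q12 th by (simp add: X_def)
  have t3: "d \<theta> s \<le> Y + d q2 s" using d_tri[of \<theta> q2 s] q12 th s by (simp add: Y_def)
  have t4: "Y \<le> d \<theta> s + d s q2" using d_tri[of \<theta> s q2] q12 th s by (simp add: Y_def)
  have t5: "A \<le> d 1 \<theta> + d \<theta> s" using d_tri[of 1 \<theta> s] th s by (simp add: A_def)
  have s1: "d 1 q1 = d q1 1" "d s q2 = d q2 s" "d \<theta> 1 = d 1 \<theta>" using d_sym q12 s th by auto
  have "X + Y \<ge> A - \<delta>" using t1 t3 t5 dq1 dq2 s1 by (simp add: \<zeta>_def)
  moreover have "X powr p + Y powr p \<le> 2 * (A/2) powr p + \<delta>"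
    using sum D_eq[of \<theta> q1] D_eq[of \<theta> q2] th q12 by (simp add: X_def Y_def L_def)
  ultimately have g: "\<bar>X - A/2\<bar> \<le> \<epsilon>/2 \<and> \<bar>Y - A/2\<bar> \<le> \<epsilon>/2" using gp X0 by blast
  show ?thesis
  proof (intro exI[of _ \<theta>] conjI)
    show "\<theta> \<ge> 0" using th by simp
    show "\<bar>d 1 \<theta> - d 1 s / 2\<bar> \<le> \<epsilon>" using g t1 t2 s1 dq1 unfolding A_def \<zeta>_def by linarith
    show "\<bar>d \<theta> s - d 1 s / 2\<bar> \<le> \<epsilon>" using g t3 t4 s1 dq2 unfolding A_def \<zeta>_def by linarith
  qed
qed

end



context thm7 begin

lemma mid_pos:
  assumes x: "x > 0" and y: "y \<ge> 0" and ep: "\<epsilon> > 0"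
  shows "\<exists>\<theta>\<ge>0. \<bar>d x \<theta> - d x y / 2\<bar> \<le> \<epsilon> \<and> \<bar>d \<theta> y - d x y / 2\<bar> \<le> \<epsilon>"
proof -
  have xa: "x powr a > 0" using x by simp
  obtain \<theta> where th: "\<theta> \<ge> 0" "\<bar>d 1 \<theta> - d 1 (y/x) / 2\<bar> \<le> \<epsilon> / x powr a"
     "\<bar>d \<theta> (y/x) - d 1 (y/x) / 2\<bar> \<le> \<epsilon> / x powr a"
    using mid1[of "y/x" "\<epsilon> / x powr a"] x y ep xa by auto
  have e1: "d x (x*\<theta>) = x powr a * d 1 \<theta>" using d_hom[OF x, of 1 \<theta>] th by simp
  have e2: "d (x*\<theta>) y = x powr a * d \<theta> (y/x)" using d_hom[OF x, of \<theta> "y/x"] th x y by simp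
  have e3: "d x y = x powr a * d 1 (y/x)" using d_hom[OF x, of 1 "y/x"] x y by simp
  have k: "\<bar>x powr a * u - x powr a * v / 2\<bar> \<le> \<epsilon>" if "\<bar>u - v/2\<bar> \<le> \<epsilon> / x powr a" for u v
  proof -
    have "x powr a * u - x powr a * v / 2 = x powr a * (u - v/2)" by (simp add: algebra_simps)
    hence "\<bar>x powr a * u - x powr a * v / 2\<bar> = x powr a * \<bar>u - v/2\<bar>"
      using xa by (simp add: abs_mult)
    also have "\<dots> \<le> x powr a * (\<epsilon> / x powr a)" using that xa by (intro mult_left_mono) auto
    also have "\<dots> = \<epsilon>" using xa by simp
    finally show ?thesis .
  qed
  show ?thesis
    by (rule exI[of _ "x*\<theta>"]) (use th x e1 e2 e3 k in auto)
qed

lemma mid: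
  assumes x: "x \<ge> 0" and y: "y \<ge> 0" and ep: "\<epsilon> > 0"
  shows "\<exists>\<theta>\<ge>0. \<bar>d x \<theta> - d x y / 2\<bar> \<le> \<epsilon> \<and> \<bar>d \<theta> y - d x y / 2\<bar> \<le> \<epsilon>"
proof (cases "x > 0")
  case True thus ?thesis using mid_pos y ep by blast
next
  case False
  hence x0: "x = 0" using x by simp
  show ?thesis
  proof (cases "y > 0")
    case True
    obtain \<theta> where th: "\<theta> \<ge> 0" "\<bar>d y \<theta> - d y x / 2\<bar> \<le> \<epsilon>" "\<bar>d \<theta> x - d y x / 2\<bar> \<le> \<epsilon>"
      using mid_pos[OF True x ep] by blast
    thus ?thesis using d_sym x y by (intro exI[of _ \<theta>]) auto
  next
    case False
    hence "y = 0" using y by simp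
    thus ?thesis using x0 d_self ep by (intro exI[of _ 0]) auto
  qed
qed

lemma scale_abs: fixes c x y e :: real assumes "c > 0" "\<bar>x*c - y*c\<bar> \<le> e*c" shows "\<bar>x - y\<bar> \<le> e"
proof -
  have "\<bar>x*c - y*c\<bar> = \<bar>x - y\<bar> * c" using assms(1) by (simp add: abs_mult flip: left_diff_distrib)
  thus ?thesis using assms by simp
qed

definition "E t = d 0 t + d t 1 - c0"

lemma E_nonneg: "t \<ge> 0 \<Longrightarrow> E t \<ge> 0"
  using d_tri[of 0 t 1] by (simp add: E_def c0_def)

lemma E_cont:
  assumes t: "t \<ge> 0" and z: "\<zeta> > 0"
  shows "\<exists>e>0. \<forall>w\<ge>0. \<bar>w - t\<bar> < e \<longrightarrow> \<bar>E w - E t\<bar> < \<zeta>"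
proof -
  obtain e where e: "e > 0" "\<And>w. w \<ge> 0 \<Longrightarrow> \<bar>w - t\<bar> < e \<Longrightarrow> d w t < \<zeta>/2"
    using d_cont[OF t, of "\<zeta>/2"] z by auto
  show ?thesis
  proof (intro exI[of _ e] conjI allI impI e(1))
    fix w :: real assume w: "w \<ge> 0" "\<bar>w - t\<bar> < e"
    have "d w t < \<zeta>/2" using e w by blast
    moreover have "d 0 w \<le> d 0 t + d t w" "d 0 t \<le> d 0 w + d w t"
      "d w 1 \<le> d w t + d t 1" "d t 1 \<le> d t w + d w 1"
      using d_tri t w by auto
    moreover have "d t w = d w t" using d_sym t w by auto
    ultimately show "\<bar>E w - E t\<bar> < \<zeta>" unfolding E_def by linarith
  qed
qed

lemma pow_cont:
  assumes v: "v \<ge> 0" and e: "e > 0"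
  shows "\<exists>\<eta>>0. \<forall>v'\<ge>0. \<bar>v' - v\<bar> < \<eta> \<longrightarrow> \<bar>v' powr p - v powr p\<bar> < e"
proof -
  have "continuous_on {0..} (\<lambda>v::real. v powr p)"
    by (rule continuous_on_powr') (use p_pos in \<open>auto intro!: continuous_intros\<close>)
  hence "\<forall>\<epsilon>>0. \<exists>\<delta>>0. \<forall>x'\<in>{0..}. \<bar>x' - v\<bar> < \<delta> \<longrightarrow> \<bar>x' powr p - v powr p\<bar> < \<epsilon>"
    unfolding continuous_on_iff using v by (auto simp: dist_real_def)
  then obtain \<eta> where "\<eta> > 0" "\<forall>x'\<in>{0..}. \<bar>x' - v\<bar> < \<eta> \<longrightarrow> \<bar>x' powr p - v powr p\<bar> < e"
    using e by blast
  thus ?thesis by auto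
qed

lemma pa_inv: "x \<ge> 0 \<Longrightarrow> (x powr a) powr p = x"
  using ap by (simp add: powr_powr)
lemma ap_inv: "x \<ge> 0 \<Longrightarrow> (x powr p) powr a = x"
  using ap by (simp add: powr_powr mult.commute)

lemma approx:
  assumes v: "v \<ge> 0" and H: "\<And>\<epsilon>. \<epsilon> > 0 \<Longrightarrow> \<exists>\<theta>\<ge>0. \<bar>\<theta> powr a - v\<bar> \<le> \<epsilon> \<and> E \<theta> \<le> \<epsilon>"
  shows "E (v powr p) = 0"
proof (rule ccontr)
  define w where "w = v powr p"
  assume "E (v powr p) \<noteq> 0"
  hence Ew: "E w > 0" using E_nonneg[of w] by (simp add: w_def)
  obtain e where e: "e > 0" "\<And>x. x \<ge> 0 \<Longrightarrow> \<bar>x - w\<bar> < e \<Longrightarrow> \<bar>E x - E w\<bar> < E w / 2"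
    using E_cont[of w "E w / 2"] Ew by (auto simp: w_def)
  obtain \<eta> where eta: "\<eta> > 0" "\<And>v'. v' \<ge> 0 \<Longrightarrow> \<bar>v' - v\<bar> < \<eta> \<Longrightarrow> \<bar>v' powr p - v powr p\<bar> < e"
    using pow_cont[OF v e(1)] by auto
  obtain \<theta> where th: "\<theta> \<ge> 0" "\<bar>\<theta> powr a - v\<bar> \<le> min (\<eta>/2) (E w / 4)" "E \<theta> \<le> min (\<eta>/2) (E w / 4)"
    using H[of "min (\<eta>/2) (E w / 4)"] eta Ew by auto
  have "\<bar>(\<theta> powr a) powr p - v powr p\<bar> < e" using eta th by (intro eta(2)) auto
  hence "\<bar>\<theta> - w\<bar> < e" using pa_inv[OF th(1)] by (simp add: w_def)
  hence "\<bar>E \<theta> - E w\<bar> < E w / 2" using e th by blast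
  thus False using th Ew by linarith
qed

lemma step_half:
  assumes u: "0 \<le> u" "u \<le> 1" and Eu: "E (u powr p) = 0"
  shows "E ((u/2) powr p) = 0"
proof (rule approx)
  show "u/2 \<ge> 0" using u by simp
  fix \<epsilon> :: real assume ep: "\<epsilon> > 0"
  define t where "t = u powr p"
  have t0: "t \<ge> 0" by (simp add: t_def)
  have ta: "t powr a = u" using ap_inv u by (simp add: t_def)
  define \<epsilon>' where "\<epsilon>' = min (\<epsilon>/2) (\<epsilon> * c0)"
  have ep': "\<epsilon>' > 0" using ep c0_pos by (simp add: \<epsilon>'_def)
  obtain \<theta> where th: "\<theta> \<ge> 0" "\<bar>d 0 \<theta> - d 0 t / 2\<bar> \<le> \<epsilon>'" "\<bar>d \<theta> t - d 0 t / 2\<bar> \<le> \<epsilon>'"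
    using mid[of 0 t \<epsilon>'] t0 ep' by auto
  have d0t: "d 0 t = u * c0" using d0[OF t0] ta by simp
  have d0th: "d 0 \<theta> = \<theta> powr a * c0" using d0 th by simp
  have "\<bar>\<theta> powr a * c0 - u/2 * c0\<bar> \<le> \<epsilon>'" using th(2) d0t d0th by simp
  hence "\<bar>\<theta> powr a * c0 - (u/2) * c0\<bar> \<le> \<epsilon> * c0" by (simp add: \<epsilon>'_def)
  hence c1: "\<bar>\<theta> powr a - u/2\<bar> \<le> \<epsilon>" by (rule scale_abs[OF c0_pos])
  have "E \<theta> \<le> d 0 \<theta> + (d \<theta> t + d t 1) - c0" using d_tri[of \<theta> t 1] th t0 by (simp add: E_def)
  also have "\<dots> \<le> d 0 t + d t 1 - c0 + 2 * \<epsilon>'" using th by linarith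
  also have "d 0 t + d t 1 - c0 = 0" using Eu by (simp add: E_def t_def)
  finally have "E \<theta> \<le> \<epsilon>" by (simp add: \<epsilon>'_def)
  thus "\<exists>\<theta>\<ge>0. \<bar>\<theta> powr a - u/2\<bar> \<le> \<epsilon> \<and> E \<theta> \<le> \<epsilon>" using c1 th by blast
qed

lemma step_up:
  assumes u: "0 \<le> u" "u \<le> 1" and Eu: "E (u powr p) = 0"
  shows "E (((1+u)/2) powr p) = 0"
proof (rule approx)
  show "(1+u)/2 \<ge> 0" using u by simp
  fix \<epsilon> :: real assume ep: "\<epsilon> > 0"
  define t where "t = u powr p"
  have t0: "t \<ge> 0" by (simp add: t_def)
  have ta: "t powr a = u" using ap_inv u by (simp add: t_def)
  define \<epsilon>' where "\<epsilon>' = min (\<epsilon>/2) (\<epsilon> * c0)"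
  have ep': "\<epsilon>' > 0" using ep c0_pos by (simp add: \<epsilon>'_def)
  obtain \<theta> where th: "\<theta> \<ge> 0" "\<bar>d t \<theta> - d t 1 / 2\<bar> \<le> \<epsilon>'" "\<bar>d \<theta> 1 - d t 1 / 2\<bar> \<le> \<epsilon>'"
    using mid[of t 1 \<epsilon>'] t0 ep' by auto
  have d0t: "d 0 t = u * c0" using d0[OF t0] ta by simp
  have dt1: "d t 1 = c0 - u * c0" using Eu d0t by (simp add: E_def t_def)
  have d0th: "d 0 \<theta> = \<theta> powr a * c0" using d0 th by simp
  have tr1: "d 0 1 \<le> d 0 \<theta> + d \<theta> 1" and tr2: "d 0 \<theta> \<le> d 0 t + d t \<theta>"
    using d_tri th t0 by auto
  have "\<bar>\<theta> powr a * c0 - (1+u)/2 * c0\<bar> \<le> \<epsilon>'"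
    using tr1 tr2 th dt1 d0t d0th unfolding c0_def[symmetric] by (simp add: field_simps abs_le_iff)
  hence "\<bar>\<theta> powr a * c0 - ((1+u)/2) * c0\<bar> \<le> \<epsilon> * c0" by (simp add: \<epsilon>'_def)
  hence c1: "\<bar>\<theta> powr a - (1+u)/2\<bar> \<le> \<epsilon>" by (rule scale_abs[OF c0_pos])
  have "E \<theta> \<le> (d 0 t + d t \<theta>) + d \<theta> 1 - c0" using tr2 by (simp add: E_def)
  also have "\<dots> \<le> d 0 t + d t 1 - c0 + 2 * \<epsilon>'" using th by linarith
  also have "d 0 t + d t 1 - c0 = 0" using Eu by (simp add: E_def t_def)
  finally have "E \<theta> \<le> \<epsilon>" by (simp add: \<epsilon>'_def)
  thus "\<exists>\<theta>\<ge>0. \<bar>\<theta> powr a - (1+u)/2\<bar> \<le> \<epsilon> \<and> E \<theta> \<le> \<epsilon>" using c1 th by blast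
qed

end



context thm7 begin

lemma dyadic: "\<forall>k \<le> (2::nat)^n. E ((real k / 2^n) powr p) = 0"
proof (induction n)
  case 0
  have E01: "E 0 = 0" "E 1 = 0" using d_self by (simp_all add: E_def c0_def)
  show ?case
  proof (intro allI impI)
    fix k :: nat assume "k \<le> 2^0"
    hence "k = 0 \<or> k = 1" by auto
    thus "E ((real k / 2^0) powr p) = 0" using E01 by auto
  qed
next
  case (Suc n)
  show ?case
  proof (intro allI impI)
    fix k :: nat assume k: "k \<le> 2 ^ Suc n"
    show "E ((real k / 2 ^ Suc n) powr p) = 0"
    proof (cases "k \<le> 2^n")
      case True
      define u where "u = real k / 2^n"
      have "real k \<le> real (2^n)" using True by (simp only: of_nat_le_iff)
      hence u: "0 \<le> u" "u \<le> 1" by (auto simp: u_def)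
      have Eu: "E (u powr p) = 0" using Suc True by (simp add: u_def)
      have eq: "real k / 2 ^ Suc n = u / 2" by (simp add: u_def)
      show ?thesis unfolding eq by (rule step_half[OF u Eu])
    next
      case False
      define j where "j = k - 2^n"
      have kj: "real k = 2^n + real j" using False by (simp add: j_def)
      have j: "j \<le> 2^n" using k False by (simp add: j_def)
      define u where "u = real j / 2^n"
      have "real j \<le> real (2^n)" using j by (simp only: of_nat_le_iff)
      hence u: "0 \<le> u" "u \<le> 1" by (auto simp: u_def)
      have Eu: "E (u powr p) = 0" using Suc j by (simp add: u_def)
      have eq: "real k / 2 ^ Suc n = (1 + u) / 2" by (simp add: u_def kj field_simps)
      show ?thesis unfolding eq by (rule step_up[OF u Eu])
    qed
  qed
qed

lemma all_E: assumes u: "0 \<le> u" "u \<le> 1" shows "E (u powr p) = 0"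
proof (rule approx[OF u(1)])
  fix \<epsilon> :: real assume ep: "\<epsilon> > 0"
  obtain n where n: "(1/2::real)^n < \<epsilon>" using real_arch_pow_inv[OF ep, of "1/2"] by auto
  define k where "k = nat \<lfloor>u * 2^n\<rfloor>"
  have fl: "real_of_int \<lfloor>u * 2^n\<rfloor> \<le> u * 2^n" "u * 2^n < real_of_int \<lfloor>u * 2^n\<rfloor> + 1" by linarith+
  have fl0: "\<lfloor>u * 2^n\<rfloor> \<ge> 0" using u by simp
  have rk: "real k = real_of_int \<lfloor>u * 2^n\<rfloor>" using fl0 by (simp add: k_def)
  have "u * 2^n \<le> 1 * 2^n" by (rule mult_right_mono) (use u in auto)
  hence "real k \<le> 2^n" using rk fl(1) by linarith
  hence "real k \<le> real (2^n)" by simp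
  hence kle: "k \<le> 2^n" by (simp only: of_nat_le_iff)
  define v where "v = real k / 2^n"
  have v0: "v \<ge> 0" by (simp add: v_def)
  have d1: "u - v = (u*2^n - real k)/2^n" by (simp add: v_def field_simps)
  have d2: "u*2^n - real k < 1" "0 \<le> u*2^n - real k" using fl rk by linarith+
  have "(u*2^n - real k)/2^n < 1/2^n" by (rule divide_strict_right_mono[OF d2(1)]) simp
  moreover have "0 \<le> (u*2^n - real k)/2^n" using d2(2) by simp
  ultimately have "v \<le> u" "u - v < 1 / 2^n" using d1 by linarith+
  hence "\<bar>v - u\<bar> \<le> \<epsilon>" using n by (simp add: power_divide)
  moreover have "E (v powr p) = 0" using dyadic kle by (simp add: v_def)
  moreover have "(v powr p) powr a = v" using ap_inv v0 by simp
  ultimately show "\<exists>\<theta>\<ge>0. \<bar>\<theta> powr a - u\<bar> \<le> \<epsilon> \<and> E \<theta> \<le> \<epsilon>"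
    using ep by (intro exI[of _ "v powr p"]) auto
qed

end



context thm7 begin

lemma dt1: assumes t: "0 \<le> t" "t \<le> 1" shows "d t 1 = c0 - t powr a * c0"
proof -
  define u where "u = t powr a"
  have u: "0 \<le> u" "u \<le> 1" using t a0 powr_mono2[of a t 1] by (auto simp: u_def)
  have "E t = 0" using all_E[OF u] pa_inv[OF t(1)] by (simp add: u_def)
  thus ?thesis using d0[OF t(1)] by (simp add: E_def)
qed

lemma f0_pos: "f 0 > 0"
proof -
  have "f 0 = c0 powr p" using c0_f0 pa_inv f_nonneg by simp
  thus ?thesis using c0_pos by simp
qed

lemma c0p: "c0 powr p = f 0" using c0_f0 pa_inv f_nonneg by simp

lemma result_le1: assumes s: "0 \<le> s" "s \<le> 1" shows "f s = f 0 * (1 - s powr a) powr p"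
proof -
  have sa: "s powr a \<le> 1" using s a0 powr_mono2[of a s 1] by simp
  have e1: "f s = d s 1 powr p" using s D_pos[of s 1] D_eq[of s 1] by simp
  have e2: "d s 1 = c0 * (1 - s powr a)" using dt1[OF s] by (simp add: algebra_simps)
  have e3: "(c0 * (1 - s powr a)) powr p = c0 powr p * (1 - s powr a) powr p"
    by (rule powr_mult; use c0_pos sa in simp)
  show ?thesis using e1 e2 e3 c0p by simp
qed

lemma result: assumes s: "s \<ge> 0" shows "F s = ereal (f 0 * \<bar>s powr a - 1\<bar> powr (1 / a))"
proof (cases "s \<le> 1")
  case True
  have "s powr a \<le> 1" using s True a0 powr_mono2[of a s 1] by simp
  hence "\<bar>s powr a - 1\<bar> = 1 - s powr a" by simp
  thus ?thesis using result_le1[OF s True] F_fin[OF s] by (simp add: p_def)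
next
  case False
  hence s1: "s > 1" by simp
  have sa: "s powr a > 1" using powr_less_mono2[OF a0, of 1 s] s1 by simp
  have isv: "0 \<le> 1/s" "1/s \<le> 1" using s1 by auto
  have e1: "f s = s * f (1/s)" using s1 by (intro f_sym) simp
  have e2: "f (1/s) = f 0 * (1 - (1/s) powr a) powr p" using result_le1[OF isv] .
  have e3: "(1/s) powr a = 1 / s powr a" by (simp add: powr_divide)
  have e4: "(s powr a) powr p = s" using pa_inv s by simp
  have e5: "(s powr a) powr p * (1 - 1 / s powr a) powr p = ((s powr a) * (1 - 1 / s powr a)) powr p"
    by (rule powr_mult[symmetric]; use sa in simp)
  have e6: "(s powr a) * (1 - 1 / s powr a) = s powr a - 1" using sa s1 by (simp add: field_simps)
  have "f s = f 0 * (s * (1 - 1 / s powr a) powr p)"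
    unfolding e1 e2 e3 by (simp only: mult.left_commute)
  also have "s * (1 - 1 / s powr a) powr p = (s powr a) powr p * (1 - 1 / s powr a) powr p"
    by (simp only: e4)
  also have "\<dots> = (s powr a - 1) powr p" by (simp only: e5 e6)
  finally have "f s = f 0 * \<bar>s powr a - 1\<bar> powr p" using sa by simp
  thus ?thesis using F_fin[OF s] by (simp add: p_def)
qed

end

theorem mainTheorem7:
  fixes F :: "real \<Rightarrow> ereal" and a :: real
  assumes "F \<in> Gamma0s"
    and "0 < a" and "a < 1"
    and "persp_pow_metric F a"
    and "\<forall>s\<ge>0. Ta a F s = F s"
  shows "\<exists>c>0. \<forall>s\<ge>0. F s = ereal (c * \<bar>s powr a - 1\<bar> powr (1 / a))"
proof -
  interpret thm7 F a using assms by unfold_locales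
  show ?thesis using f0_pos result by blast
qed

end
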